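(* Let $s\ge1$, let $q$ be a prime power, let $C^{(1)},\ldots,C^{(s)}\in\mathbb{F}_q^{\mathbb{N}\times\mathbb{N}_0}$ be finite-row generating matrices and let $\mathbf{T}:\mathbb{N}_0\to\mathbb{N}_0$ with $\mathbf{T}(m)\le m$. If $C^{(1)},\ldots,C^{(s)}$ generate a $(\mathbf{T},s)$-sequence in base $q$ via Algorithm 1 (for some admissible choice of the bijections), then, for every choice of bijections $\psi_r,\lambda_{i,j}$, Algorithm 2 with the same matrices and the input sequence $s_n=(-1)^n\lfloor (n+1)/2\rfloor$ ($n\ge0$), viewed in $\mathbb{Z}_q$, produces a sequence $(\boldsymbol{x}_n)_{n\ge0}$ such that both subsequences $(\boldsymbol{x}_{2n})_{n\ge0}$ and $(\boldsymbol{x}_{2n+1})_{n\ge0}$ are $(\mathbf{T},s)$-sequences in base $q$.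
   Context: $\mathbb{F}_q$ is the finite field with $q$ elements, $D_q=\{0,\ldots,q-1\}$; $\mathbb{Z}_q$ is the ring of $q$-adic integers, each $z\in\mathbb{Z}_q$ having a unique representation $z=\sum_{r\ge0}a_rq^r$, $a_r\in D_q$. A matrix $(c^{(i)}_{j,r})_{j\ge1,r\ge0}$ is finite-row if each row has finitely many nonzero entries. Algorithm 2: choose bijections $\psi_r:D_q\to\mathbb{F}_q$ ($r\ge0$), finite-row matrices $C^{(i)}=(c^{(i)}_{j,r})$, bijections $\lambda_{i,j}:\mathbb{F}_q\to D_q$ and $(s_n)$ in $\mathbb{Z}_q$; with $s_n=\sum_ra_rq^r$ put $x_n^{(i)}=\sum_{j\ge1}\lambda_{i,j}(\sum_rc^{(i)}_{j,r}\psi_r(a_r))q^{-j}$, $\boldsymbol{x}_n=(x_n^{(1)},\ldots,x_n^{(s)})$. Algorithm 1 is the same with $s_n=n$ and $\psi_r(0)=0$ for all large $r$. The $m$-digit truncation $[x_n^{(i)}]_{q,m}=\sum_{j=1}^m\lambda_{i,j}(\cdots)q^{-j}$, applied coordinatewise. Elementary interval in base $q$: $\prod_i[a_iq^{-d_i},(a_i+1)q^{-d_i})$, $d_i\ge0$, $0\le a_i<q^{d_i}$. For $0\le t\le m$, a $(t,m,s)$-net in base $q$ is a set of $q^m$ points in $[0,1)^s$ with exactly $q^t$ points in every elementary interval of volume $q^{t-m}$. A sequence $(\boldsymbol{y}_n)$ is a $(\mathbf{T},s)$-sequence in base $q$ if for all $k\ge0$ and $m$ with $\mathbf{T}(m)<m$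 the points $[\boldsymbol{y}_n]_{q,m}$, $kq^m\le n<(k+1)q^m$, form a $(\mathbf{T}(m),m,s)$-net in base $q$. *)

theory Defs
  imports Complex_Main "HOL-Library.Cardinality"
begin

text \<open>Base q digit number r of the q-adic integer represented by an integer z
  (floor division, so negative integers get their q-adic expansion).\<close>
definition qdigit :: "nat \<Rightarrow> int \<Rightarrow> nat \<Rightarrow> nat" where
  "qdigit q z r = nat ((z div (int q ^ r)) mod int q)"

definition finite_row :: "nat \<Rightarrow> (nat \<Rightarrow> nat \<Rightarrow> nat \<Rightarrow> 'a::zero) \<Rightarrow> bool" where
  "finite_row s C = (\<forall>i\<in>{1..s}. \<forall>j\<ge>1. finite {r. C i j r \<noteq> 0})"

definition admissible_bij ::
  "nat \<Rightarrow> (nat \<Rightarrow> nat \<Rightarrow> 'a::finite) \<Rightarrow> (nat \<Rightarrow> nat \<Rightarrow> 'a \<Rightarrow> nat) \<Rightarrow> bool" where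
  "admissible_bij s psi lam =
     ((\<forall>r. bij_betw (psi r) {..< CARD('a)} (UNIV :: 'a set)) \<and>
      (\<forall>i\<in>{1..s}. \<forall>j\<ge>1. bij_betw (lam i j) (UNIV :: 'a set) {..< CARD('a)}))"

definition alg1_admissible ::
  "nat \<Rightarrow> (nat \<Rightarrow> nat \<Rightarrow> 'a::{zero,finite}) \<Rightarrow> (nat \<Rightarrow> nat \<Rightarrow> 'a \<Rightarrow> nat) \<Rightarrow> bool" where
  "alg1_admissible s psi lam = (admissible_bij s psi lam \<and> (\<exists>R. \<forall>r\<ge>R. psi r 0 = 0))"

text \<open>Digit j of coordinate i of the point produced by Algorithm 2 from input z in Z_q
  (integers embedded in Z_q):  lam i j (sum_r c^(i)_{j,r} psi_r(a_r)).\<close>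
definition alg_digit ::
  "(nat \<Rightarrow> nat \<Rightarrow> 'a::{field,finite}) \<Rightarrow> (nat \<Rightarrow> nat \<Rightarrow> nat \<Rightarrow> 'a) \<Rightarrow> (nat \<Rightarrow> nat \<Rightarrow> 'a \<Rightarrow> nat)
    \<Rightarrow> int \<Rightarrow> nat \<Rightarrow> nat \<Rightarrow> nat" where
  "alg_digit psi C lam z i j =
     lam i j (\<Sum>r\<in>{r. C i j r \<noteq> 0}. C i j r * psi r (qdigit CARD('a) z r))"

definition trunc_pt :: "nat \<Rightarrow> nat \<Rightarrow> (nat \<Rightarrow> nat \<Rightarrow> nat) \<Rightarrow> nat \<Rightarrow> real" where
  "trunc_pt q m dig = (\<lambda>i. \<Sum>j=1..m. real (dig i j) / real q ^ j)"

definition in_elem_interval :: "nat \<Rightarrow> nat \<Rightarrow> (nat \<Rightarrow> nat) \<Rightarrow> (nat \<Rightarrow> nat) \<Rightarrow> (nat \<Rightarrow> real) \<Rightarrow> bool" where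
  "in_elem_interval q s d a x =
     (\<forall>i\<in>{1..s}. real (a i) / real q ^ d i \<le> x i \<and> x i < (real (a i) + 1) / real q ^ d i)"

text \<open>The family (P n), n in N (counted with multiplicity), is a (t,m,s)-net in base q.
  Elementary intervals of volume q^(t-m) are exactly those with d_1+...+d_s = m-t.\<close>
definition is_net :: "nat \<Rightarrow> nat \<Rightarrow> nat \<Rightarrow> nat \<Rightarrow> (nat \<Rightarrow> nat \<Rightarrow> real) \<Rightarrow> nat set \<Rightarrow> bool" where
  "is_net q t m s P N =
     (t \<le> m \<and> finite N \<and> card N = q ^ m \<and>
      (\<forall>n\<in>N. \<forall>i\<in>{1..s}. 0 \<le> P n i \<and> P n i < 1) \<and>
      (\<forall>d a. (\<Sum>i=1..s. d i) = m - t \<and> (\<forall>i\<in>{1..s}. a i < q ^ d i) \<longrightarrow>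
         card {n\<in>N. in_elem_interval q s d a (P n)} = q ^ t))"

definition is_TS_seq :: "nat \<Rightarrow> (nat \<Rightarrow> nat) \<Rightarrow> nat \<Rightarrow> (nat \<Rightarrow> nat \<Rightarrow> nat \<Rightarrow> nat) \<Rightarrow> bool" where
  "is_TS_seq q T s dig =
     (\<forall>k m. T m < m \<longrightarrow>
        is_net q (T m) m s (\<lambda>n. trunc_pt q m (dig n)) {k * q ^ m ..< (k + 1) * q ^ m})"

definition alt_seq :: "nat \<Rightarrow> int" where
  "alt_seq n = (-1) ^ n * int ((n + 1) div 2)"

end

theory Submission imports Defs "HOL-Library.FuncSet" begin

definition enc :: "nat \<Rightarrow> nat \<Rightarrow> (nat \<Rightarrow> nat) \<Rightarrow> nat" where
  "enc q d \<delta> = (\<Sum>j=1..d. \<delta> j * q ^ (d - j))"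

lemma enc_0[simp]: "enc q 0 \<delta> = 0" by (simp add: enc_def)

lemma enc_Suc: "enc q (Suc d) \<delta> = q * enc q d \<delta> + \<delta> (Suc d)"
proof -
  have "enc q (Suc d) \<delta> = (\<Sum>j=1..d. \<delta> j * q ^ (Suc d - j)) + \<delta> (Suc d)"
    by (simp add: enc_def)
  also have "(\<Sum>j=1..d. \<delta> j * q ^ (Suc d - j)) = (\<Sum>j=1..d. q * (\<delta> j * q ^ (d - j)))"
    by (rule sum.cong) (auto simp: Suc_diff_le)
  finally show ?thesis by (simp add: enc_def sum_distrib_left)
qed

lemma enc_cong: "(\<And>j. j \<in> {1..d} \<Longrightarrow> \<delta> j = \<delta>' j) \<Longrightarrow> enc q d \<delta> = enc q d \<delta>'"
  unfolding enc_def by (rule sum.cong) auto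

lemma enc_lt: "(\<And>j. j \<in> {1..d} \<Longrightarrow> \<delta> j < q) \<Longrightarrow> enc q d \<delta> < q ^ d"
proof (induction d)
  case 0 then show ?case by simp
next
  case (Suc d)
  have h: "enc q d \<delta> < q ^ d" using Suc by auto
  have h2: "\<delta> (Suc d) < q" using Suc by auto
  have "q * enc q d \<delta> + \<delta> (Suc d) < q * enc q d \<delta> + q" using h2 by simp
  also have "\<dots> = q * (enc q d \<delta> + 1)" by simp
  also have "\<dots> \<le> q * q ^ d" using h by (intro mult_le_mono2) simp
  finally show ?case by (simp add: enc_Suc)
qed

lemma enc_inj: "(\<And>j. j \<in> {1..d} \<Longrightarrow> \<delta> j < q) \<Longrightarrow> (\<And>j. j \<in> {1..d} \<Longrightarrow> \<delta>' j < q)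
   \<Longrightarrow> enc q d \<delta> = enc q d \<delta>' \<Longrightarrow> j \<in> {1..d} \<Longrightarrow> \<delta> j = \<delta>' j"
proof (induction d arbitrary: j)
  case 0 then show ?case by simp
next
  case (Suc d)
  have a: "\<delta> (Suc d) < q" "\<delta>' (Suc d) < q" using Suc.prems by auto
  have e: "q * enc q d \<delta> + \<delta> (Suc d) = q * enc q d \<delta>' + \<delta>' (Suc d)"
    using Suc.prems by (simp add: enc_Suc)
  then have "(q * enc q d \<delta> + \<delta> (Suc d)) mod q = (q * enc q d \<delta>' + \<delta>' (Suc d)) mod q" by simp
  then have l: "\<delta> (Suc d) = \<delta>' (Suc d)" using a by simp
  then have "enc q d \<delta> = enc q d \<delta>'" using e a by simp
  then show ?case using Suc l by (cases "j = Suc d") auto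
qed

lemma enc_surj: "a < q ^ d \<Longrightarrow> \<exists>\<delta>. (\<forall>j\<in>{1..d}. \<delta> j < q) \<and> enc q d \<delta> = a"
proof (induction d arbitrary: a)
  case 0 then show ?case by simp
next
  case (Suc d)
  have q: "q > 0" using Suc.prems by (cases q) auto
  have "a div q < q ^ d" using Suc.prems q by (simp add: div_less_iff_less_mult mult.commute)
  then obtain \<delta> where d: "\<forall>j\<in>{1..d}. \<delta> j < q" "enc q d \<delta> = a div q" using Suc.IH by blast
  define \<delta>' where "\<delta>' = \<delta>(Suc d := a mod q)"
  have "enc q d \<delta>' = enc q d \<delta>" by (rule enc_cong) (auto simp: \<delta>'_def)
  then have "enc q (Suc d) \<delta>' = a" using d by (simp add: enc_Suc \<delta>'_def)
  moreover have "\<forall>j\<in>{1..Suc d}. \<delta>' j < q" using d q by (auto simp: \<delta>'_def)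
  ultimately show ?case by blast
qed

lemma digsum_le:
  assumes "q > 0" "\<And>j. j \<in> {1..m} \<Longrightarrow> \<delta> j < q"
  shows "(\<Sum>j=1..m. real (\<delta> j) / real q ^ j) \<le> 1 - 1 / real q ^ m"
  using assms(2)
proof (induction m)
  case 0 then show ?case by simp
next
  case (Suc m)
  have ih: "(\<Sum>j=1..m. real (\<delta> j) / real q ^ j) \<le> 1 - 1 / real q ^ m" using Suc by auto
  have "\<delta> (Suc m) + 1 \<le> q" using Suc.prems by (simp add: Suc_le_eq)
  then have b: "real (\<delta> (Suc m)) \<le> real q - 1" by linarith
  have qp: "real q > 0" using assms by simp
  have "real (\<delta> (Suc m)) / real q ^ Suc m \<le> (real q - 1) / real q ^ Suc m"
    using b qp by (simp add: divide_right_mono)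
  also have "\<dots> = 1 / real q ^ m - 1 / real q ^ Suc m" using qp by (simp add: field_simps)
  finally show ?case using ih by simp
qed

lemma digsum_split:
  assumes "d \<le> m" "q > 0"
  shows "real q ^ d * (\<Sum>j=1..m. real (\<delta> j) / real q ^ j)
       = real (enc q d \<delta>) + (\<Sum>j=1..m-d. real (\<delta> (j + d)) / real q ^ j)"
proof -
  obtain p where m: "m = d + p" using assms by (metis le_add_diff_inverse)
  have qp: "real q > 0" using assms by simp
  have "(\<Sum>j=1..m. real (\<delta> j) / real q ^ j) = (\<Sum>j=1..d. real (\<delta> j) / real q ^ j)
        + (\<Sum>j=d+1..d+p. real (\<delta> j) / real q ^ j)"
    unfolding m by (rule sum.ub_add_nat) simp
  also have "(\<Sum>j=d+1..d+p. real (\<delta> j) / real q ^ j) = (\<Sum>j=1..p. real (\<delta> (j + d)) / real q ^ (j + d))"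
    using sum.shift_bounds_cl_nat_ivl[of "\<lambda>j. real (\<delta> j) / real q ^ j" 1 d p] by (simp add: add.commute)
  finally have "real q ^ d * (\<Sum>j=1..m. real (\<delta> j) / real q ^ j) =
     (\<Sum>j=1..d. real q ^ d * (real (\<delta> j) / real q ^ j)) + (\<Sum>j=1..p. real q ^ d * (real (\<delta> (j + d)) / real q ^ (j + d)))"
    by (simp add: distrib_left sum_distrib_left)
  also have "(\<Sum>j=1..d. real q ^ d * (real (\<delta> j) / real q ^ j)) = (\<Sum>j=1..d. real (\<delta> j * q ^ (d - j)))"
  proof (rule sum.cong)
    fix j assume "j \<in> {1..d}"
    then have "real q ^ d = real q ^ j * real q ^ (d - j)" by (simp add: power_add[symmetric])
    then show "real q ^ d * (real (\<delta> j) / real q ^ j) = real (\<delta> j * q ^ (d - j))" using qp by simp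
  qed simp
  also have "(\<Sum>j=1..p. real q ^ d * (real (\<delta> (j + d)) / real q ^ (j + d))) = (\<Sum>j=1..p. real (\<delta> (j + d)) / real q ^ j)"
    by (rule sum.cong) (use qp in \<open>auto simp: power_add\<close>)
  finally show ?thesis by (simp add: enc_def m)
qed


lemma interval_iff:
  assumes "q > 0" "d \<le> m" "\<And>j. j \<in> {1..m} \<Longrightarrow> \<delta> j < q"
  shows "(real a / real q ^ d \<le> (\<Sum>j=1..m. real (\<delta> j) / real q ^ j) \<and>
          (\<Sum>j=1..m. real (\<delta> j) / real q ^ j) < (real a + 1) / real q ^ d) \<longleftrightarrow> enc q d \<delta> = a"
proof -
  define x where "x = (\<Sum>j=1..m. real (\<delta> j) / real q ^ j)"
  define tl where "tl = (\<Sum>j=1..m-d. real (\<delta> (j + d)) / real q ^ j)"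
  have qp: "real q ^ d > 0" using assms by simp
  have X: "real q ^ d * x = real (enc q d \<delta>) + tl" unfolding x_def tl_def using digsum_split assms by blast
  have t0: "tl \<ge> 0" unfolding tl_def by (intro sum_nonneg) simp
  have "tl \<le> 1 - 1 / real q ^ (m - d)" unfolding tl_def
    by (rule digsum_le) (use assms in auto)
  moreover have "1 / real q ^ (m - d) > 0" using assms by simp
  ultimately have t1: "tl < 1" by linarith
  have e1: "real a / real q ^ d \<le> x \<longleftrightarrow> real a \<le> real q ^ d * x"
    using qp by (simp add: pos_divide_le_eq mult.commute)
  have e2: "x < (real a + 1) / real q ^ d \<longleftrightarrow> real q ^ d * x < real a + 1"
    using qp by (simp add: pos_less_divide_eq mult.commute)
  show ?thesis unfolding x_def[symmetric] e1 e2 X using t0 t1 by linarith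
qed

lemma trunc_range:
  assumes "q > 0" "\<And>j. j \<in> {1..m} \<Longrightarrow> \<delta> j < q"
  shows "0 \<le> (\<Sum>j=1..m. real (\<delta> j) / real q ^ j) \<and> (\<Sum>j=1..m. real (\<delta> j) / real q ^ j) < 1"
proof -
  have "(\<Sum>j=1..m. real (\<delta> j) / real q ^ j) \<le> 1 - 1 / real q ^ m" by (rule digsum_le) (use assms in auto)
  moreover have "1 / real q ^ m > 0" using assms by simp
  moreover have "0 \<le> (\<Sum>j=1..m. real (\<delta> j) / real q ^ j)" by (intro sum_nonneg) simp
  ultimately show ?thesis by linarith
qed

lemma in_elem_iff:
  assumes "q > 0" "\<forall>i\<in>{1..s}. d i \<le> m" "\<forall>i\<in>{1..s}. \<forall>j\<in>{1..m}. dig i j < q"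
  shows "in_elem_interval q s d a (trunc_pt q m dig) \<longleftrightarrow> (\<forall>i\<in>{1..s}. enc q (d i) (dig i) = a i)"
  unfolding in_elem_interval_def trunc_pt_def
  using interval_iff[OF assms(1)] assms(2,3) by auto

lemma in_elem_cong: "(\<forall>i\<in>{1..s}. a i = a' i) \<Longrightarrow> in_elem_interval q s d a x = in_elem_interval q s d a' x"
  unfolding in_elem_interval_def by auto

definition Lf :: "(nat \<Rightarrow> nat \<Rightarrow> nat \<Rightarrow> 'a::field) \<Rightarrow> nat \<Rightarrow> nat \<Rightarrow> nat \<Rightarrow> (nat \<Rightarrow> 'a) \<Rightarrow> 'a" where
  "Lf C m i j y = (\<Sum>r\<in>{r. C i j r \<noteq> 0} \<inter> {..<m}. C i j r * y r)"

definition good :: "nat \<Rightarrow> (nat \<Rightarrow> nat \<Rightarrow> nat \<Rightarrow> 'a::{field,finite}) \<Rightarrow> nat \<Rightarrow> nat \<Rightarrow> bool" where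
  "good s C m t = (\<forall>d. (\<Sum>i=1..s. d i) = m - t \<longrightarrow> (\<forall>\<tau>.
     card {y \<in> PiE {..<m} (\<lambda>_. UNIV :: 'a set). \<forall>i\<in>{1..s}. \<forall>j\<in>{1..d i}. Lf C m i j y = \<tau> i j}
       = CARD('a) ^ t))"

lemma card_field_ge2: "CARD('a::{field,finite}) \<ge> 2"
proof -
  have "card {0::'a, 1} = 2" by simp
  moreover have "card {0::'a, 1} \<le> CARD('a)" by (rule card_mono) auto
  ultimately show ?thesis by simp
qed


lemma main_equiv:
  fixes C :: "nat \<Rightarrow> nat \<Rightarrow> nat \<Rightarrow> 'a::{field,finite}"
    and psi :: "nat \<Rightarrow> nat \<Rightarrow> 'a" and lam :: "nat \<Rightarrow> nat \<Rightarrow> 'a \<Rightarrow> nat"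
    and g :: "nat \<Rightarrow> nat \<Rightarrow> nat" and N :: "nat set"
  assumes adm: "admissible_bij s psi lam" and fr: "finite_row s C"
    and fin: "finite N" and cardN: "card N = CARD('a) ^ m"
    and glt: "\<forall>n r. g n r < CARD('a)"
    and gconst: "\<forall>n\<in>N. \<forall>n'\<in>N. \<forall>r\<ge>m. g n r = g n' r"
    and ginj: "\<forall>n\<in>N. \<forall>n'\<in>N. (\<forall>r<m. g n r = g n' r) \<longrightarrow> n = n'"
    and tm: "t \<le> m"
  shows "is_net CARD('a) t m s
     (\<lambda>n. trunc_pt CARD('a) m (\<lambda>i j. lam i j (\<Sum>r\<in>{r. C i j r \<noteq> 0}. C i j r * psi r (g n r)))) N
     \<longleftrightarrow> good s C m t"
proof -
  define q where "q = CARD('a)"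
  have q2: "q \<ge> 2" unfolding q_def by (rule card_field_ge2)
  then have q0: "q > 0" by simp
  define Y where "Y = PiE {..<m} (\<lambda>_. UNIV :: 'a set)"
  have finY: "finite Y" unfolding Y_def by (intro finite_PiE) auto
  have cardY: "card Y = q ^ m" unfolding Y_def q_def by (simp add: card_PiE)
  define yv where "yv n = restrict (\<lambda>r. psi r (g n r)) {..<m}" for n
  have yvY: "yv n \<in> Y" for n unfolding yv_def Y_def by auto
  have psi_inj: "inj_on (psi r) {..<q}" for r
    using adm unfolding admissible_bij_def q_def by (auto dest: bij_betw_imp_inj_on)
  have inj: "inj_on yv N"
  proof (rule inj_onI)
    fix n n' assume nn: "n \<in> N" "n' \<in> N" "yv n = yv n'"
    have "g n r = g n' r" if "r < m" for r
    proof -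
      have "psi r (g n r) = psi r (g n' r)" using fun_cong[OF nn(3), of r] that by (simp add: yv_def)
      then show ?thesis using psi_inj[of r] glt unfolding q_def by (auto dest: inj_onD)
    qed
    then show "n = n'" using ginj nn by blast
  qed
  have imgY: "yv ` N = Y"
  proof (rule card_subset_eq[OF finY])
    show "yv ` N \<subseteq> Y" using yvY by auto
    show "card (yv ` N) = card Y" using card_image[OF inj] cardN cardY q_def by simp
  qed
  define S where "S i j = {r. C i j r \<noteq> 0}" for i j
  have finS: "finite (S i j)" if "i \<in> {1..s}" "j \<ge> 1" for i j
    using fr that unfolding finite_row_def S_def by auto
  have "N \<noteq> {}" using cardN q0 unfolding q_def by auto
  then obtain n0 where n0: "n0 \<in> N" by blast
  define b where "b i j = (\<Sum>r\<in>S i j - {..<m}. C i j r * psi r (g n0 r))" for i j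
  define v where "v n i j = (\<Sum>r\<in>S i j. C i j r * psi r (g n r))" for n i j
  have vsplit: "v n i j = Lf C m i j (yv n) + b i j" if "n \<in> N" "i \<in> {1..s}" "j \<ge> 1" for n i j
  proof -
    have "v n i j = (\<Sum>r\<in>S i j \<inter> {..<m}. C i j r * psi r (g n r)) + (\<Sum>r\<in>S i j - {..<m}. C i j r * psi r (g n r))"
      unfolding v_def by (rule sum.Int_Diff[OF finS[OF that(2,3)]])
    also have "(\<Sum>r\<in>S i j \<inter> {..<m}. C i j r * psi r (g n r)) = Lf C m i j (yv n)"
      unfolding Lf_def S_def yv_def by (rule sum.cong) auto
    also have "(\<Sum>r\<in>S i j - {..<m}. C i j r * psi r (g n r)) = b i j"
    proof (unfold b_def, rule sum.cong[OF refl])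
      fix r assume "r \<in> S i j - {..<m}"
      then have "r \<ge> m" by simp
      then have "g n r = g n0 r" using gconst that(1) n0 by blast
      then show "C i j r * psi r (g n r) = C i j r * psi r (g n0 r)" by simp
    qed
    finally show ?thesis .
  qed
  have count: "card {n\<in>N. \<forall>i\<in>{1..s}. \<forall>j\<in>{1..d i}. v n i j = \<tau> i j + b i j}
      = card {y\<in>Y. \<forall>i\<in>{1..s}. \<forall>j\<in>{1..d i}. Lf C m i j y = \<tau> i j}" for d \<tau>
  proof -
    let ?P = "\<lambda>y. \<forall>i\<in>{1..s}. \<forall>j\<in>{1..d i}. Lf C m i j y = \<tau> i j"
    have "{n\<in>N. \<forall>i\<in>{1..s}. \<forall>j\<in>{1..d i}. v n i j = \<tau> i j + b i j} = {n\<in>N. ?P (yv n)}"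
      using vsplit by auto
    moreover have "{y\<in>Y. ?P y} = yv ` {n\<in>N. ?P (yv n)}" using imgY by auto
    moreover have "card (yv ` {n\<in>N. ?P (yv n)}) = card {n\<in>N. ?P (yv n)}"
      by (rule card_image) (rule inj_on_subset[OF inj], auto)
    ultimately show ?thesis by simp
  qed
  have lam_bij: "bij_betw (lam i j) UNIV {..<q}" if "i \<in> {1..s}" "j \<ge> 1" for i j
    using adm that unfolding admissible_bij_def q_def by auto
  have lam_lt: "lam i j x < q" if "i \<in> {1..s}" "j \<ge> 1" for i j x
    using bij_betw_apply[OF lam_bij[OF that]] by auto
  have lam_inj: "lam i j x = lam i j y \<longleftrightarrow> x = y" if "i \<in> {1..s}" "j \<ge> 1" for i j x y
    using bij_betw_imp_inj_on[OF lam_bij[OF that]] by (auto dest: inj_onD)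
  define pt where "pt n = trunc_pt q m (\<lambda>i j. lam i j (v n i j))" for n
  have ptdef: "(\<lambda>n. trunc_pt CARD('a) m (\<lambda>i j. lam i j (\<Sum>r\<in>{r. C i j r \<noteq> 0}. C i j r * psi r (g n r)))) = pt"
    unfolding pt_def v_def S_def q_def by simp
  have setlem: "{n\<in>N. in_elem_interval q s d (\<lambda>i. enc q (d i) (\<lambda>j. lam i j (\<tau> i j))) (pt n)}
      = {n\<in>N. \<forall>i\<in>{1..s}. \<forall>j\<in>{1..d i}. v n i j = \<tau> i j}"
    if dm: "\<forall>i\<in>{1..s}. d i \<le> m" for d \<tau>
  proof -
    have "in_elem_interval q s d (\<lambda>i. enc q (d i) (\<lambda>j. lam i j (\<tau> i j))) (pt n)
       \<longleftrightarrow> (\<forall>i\<in>{1..s}. \<forall>j\<in>{1..d i}. v n i j = \<tau> i j)" for n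
    proof -
      have "in_elem_interval q s d (\<lambda>i. enc q (d i) (\<lambda>j. lam i j (\<tau> i j))) (pt n)
         \<longleftrightarrow> (\<forall>i\<in>{1..s}. enc q (d i) (\<lambda>j. lam i j (v n i j)) = enc q (d i) (\<lambda>j. lam i j (\<tau> i j)))"
        unfolding pt_def by (rule in_elem_iff[OF q0 dm]) (auto intro: lam_lt)
      also have "\<dots> \<longleftrightarrow> (\<forall>i\<in>{1..s}. \<forall>j\<in>{1..d i}. lam i j (v n i j) = lam i j (\<tau> i j))"
      proof (intro ball_cong refl iffI)
        fix i assume i: "i \<in> {1..s}"
        assume e: "enc q (d i) (\<lambda>j. lam i j (v n i j)) = enc q (d i) (\<lambda>j. lam i j (\<tau> i j))"
        show "\<forall>j\<in>{1..d i}. lam i j (v n i j) = lam i j (\<tau> i j)"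
        proof
          fix j assume j: "j \<in> {1..d i}"
          show "lam i j (v n i j) = lam i j (\<tau> i j)"
            by (rule enc_inj[OF _ _ e j]) (use i in \<open>auto intro: lam_lt\<close>)
        qed
      next
        fix i assume "\<forall>j\<in>{1..d i}. lam i j (v n i j) = lam i j (\<tau> i j)"
        then show "enc q (d i) (\<lambda>j. lam i j (v n i j)) = enc q (d i) (\<lambda>j. lam i j (\<tau> i j))"
          by (intro enc_cong) auto
      qed
      also have "\<dots> \<longleftrightarrow> (\<forall>i\<in>{1..s}. \<forall>j\<in>{1..d i}. v n i j = \<tau> i j)"
        using lam_inj by auto
      finally show ?thesis .
    qed
    then show ?thesis by auto
  qed
  have dle: "\<forall>i\<in>{1..s}. d i \<le> m" if "(\<Sum>i=1..s. d i) = m - t" for d :: "nat \<Rightarrow> nat"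
  proof
    fix i assume "i \<in> {1..s}"
    then have "d i \<le> (\<Sum>i=1..s. d i)" by (intro member_le_sum) auto
    then show "d i \<le> m" using that by simp
  qed
  have range: "\<forall>n\<in>N. \<forall>i\<in>{1..s}. 0 \<le> pt n i \<and> pt n i < 1"
  proof (intro ballI)
    fix n i assume n: "n \<in> N" and i: "i \<in> {1..s}"
    have "\<And>j. j \<in> {1..m} \<Longrightarrow> lam i j (v n i j) < q" using i lam_lt by auto
    from trunc_range[OF q0 this] show "0 \<le> pt n i \<and> pt n i < 1"
      unfolding pt_def trunc_pt_def by simp
  qed
  have main: "is_net q t m s pt N \<longleftrightarrow> good s C m t"
  proof
    assume net: "is_net q t m s pt N"
    have G: "card {y\<in>Y. \<forall>i\<in>{1..s}. \<forall>j\<in>{1..d i}. Lf C m i j y = \<tau> i j} = q ^ t"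
      if ds: "(\<Sum>i=1..s. d i) = m - t" for d :: "nat \<Rightarrow> nat" and \<tau> :: "nat \<Rightarrow> nat \<Rightarrow> 'a"
    proof -
      define a where "a i = enc q (d i) (\<lambda>j. lam i j (\<tau> i j + b i j))" for i
      have alt: "\<forall>i\<in>{1..s}. a i < q ^ d i"
        unfolding a_def by (auto intro!: enc_lt lam_lt)
      have "card {n\<in>N. in_elem_interval q s d a (pt n)} = q ^ t"
        using net ds alt unfolding is_net_def by blast
      then have "card {n\<in>N. \<forall>i\<in>{1..s}. \<forall>j\<in>{1..d i}. v n i j = \<tau> i j + b i j} = q ^ t"
        unfolding a_def setlem[OF dle[OF ds]] .
      then show ?thesis
        using count by simp
    qed
    then show "good s C m t" unfolding good_def Y_def q_def by blast
  next
    assume gd: "good s C m t"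
    show "is_net q t m s pt N" unfolding is_net_def
    proof (intro conjI allI impI)
      show "t \<le> m" "finite N" "card N = q ^ m" "\<forall>n\<in>N. \<forall>i\<in>{1..s}. 0 \<le> pt n i \<and> pt n i < 1"
        using tm fin cardN range q_def by auto
      fix d a assume da: "(\<Sum>i = 1..s. d i) = m - t \<and> (\<forall>i\<in>{1..s}. a i < q ^ d i)"
      define \<delta> where "\<delta> i = (SOME \<delta>. (\<forall>j\<in>{1..d i}. \<delta> j < q) \<and> enc q (d i) \<delta> = a i)" for i
      have \<delta>: "(\<forall>j\<in>{1..d i}. \<delta> i j < q) \<and> enc q (d i) (\<delta> i) = a i" if "i \<in> {1..s}" for i
      proof -
        have "\<exists>\<delta>. (\<forall>j\<in>{1..d i}. \<delta> j < q) \<and> enc q (d i) \<delta> = a i"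
          by (rule enc_surj) (use da that in auto)
        from someI_ex[OF this] show ?thesis unfolding \<delta>_def .
      qed
      define \<tau>' where "\<tau>' i j = inv_into UNIV (lam i j) (\<delta> i j)" for i j
      have lt: "lam i j (\<tau>' i j) = \<delta> i j" if "i \<in> {1..s}" "j \<in> {1..d i}" for i j
      proof -
        have "\<delta> i j \<in> {..<q}" using \<delta>[OF that(1)] that(2) by auto
        then show ?thesis unfolding \<tau>'_def using lam_bij[of i j] that
          by (auto intro: f_inv_into_f simp: bij_betw_def)
      qed
      have aeq: "\<forall>i\<in>{1..s}. a i = enc q (d i) (\<lambda>j. lam i j ((\<lambda>i j. \<tau>' i j - b i j) i j + b i j))"
      proof
        fix i assume i: "i \<in> {1..s}"
        have "enc q (d i) (\<lambda>j. lam i j (\<tau>' i j - b i j + b i j)) = enc q (d i) (\<delta> i)"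
          by (rule enc_cong) (use lt i in auto)
        then show "a i = enc q (d i) (\<lambda>j. lam i j ((\<lambda>i j. \<tau>' i j - b i j) i j + b i j))"
          using \<delta>[OF i] by simp
      qed
      have "{n\<in>N. in_elem_interval q s d a (pt n)}
         = {n\<in>N. in_elem_interval q s d (\<lambda>i. enc q (d i) (\<lambda>j. lam i j ((\<lambda>i j. \<tau>' i j - b i j) i j + b i j))) (pt n)}"
        using in_elem_cong[OF aeq] by simp
      also have "\<dots> = {n\<in>N. \<forall>i\<in>{1..s}. \<forall>j\<in>{1..d i}. v n i j = (\<lambda>i j. \<tau>' i j - b i j) i j + b i j}"
        by (rule setlem) (rule dle, use da in auto)
      finally have "card {n\<in>N. in_elem_interval q s d a (pt n)}
          = card {y\<in>Y. \<forall>i\<in>{1..s}. \<forall>j\<in>{1..d i}. Lf C m i j y = \<tau>' i j - b i j}"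
        using count[of d "\<lambda>i j. \<tau>' i j - b i j"] by simp
      also have "\<dots> = q ^ t"
      proof -
        have "\<forall>\<tau>. card {y\<in>Y. \<forall>i\<in>{1..s}. \<forall>j\<in>{1..d i}. Lf C m i j y = \<tau> i j} = q ^ t"
          using gd da unfolding good_def Y_def q_def by blast
        from this[rule_format, of "\<lambda>i j. \<tau>' i j - b i j"] show ?thesis by simp
      qed
      finally show "card {n\<in>N. in_elem_interval q s d a (pt n)} = q ^ t" .
    qed
  qed
  then show ?thesis unfolding ptdef q_def .
qed


lemma alg_digit_eq:
  fixes psi :: "nat \<Rightarrow> nat \<Rightarrow> 'a::{field,finite}"
  shows "alg_digit psi C lam z =
   (\<lambda>i j. lam i j (\<Sum>r\<in>{r. C i j r \<noteq> 0}. C i j r * psi r (qdigit CARD('a) z r)))"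
  by (intro ext) (simp add: alg_digit_def)

lemma qdigit_nat: "qdigit q (int n) r = n div q ^ r mod q"
  unfolding qdigit_def by (simp add: zdiv_int[symmetric] zmod_int[symmetric] of_nat_power[symmetric] del: of_nat_power)

lemma neg_divmod:
  fixes a b :: int assumes "b > 0"
  shows "(-a - 1) div b = -(a div b) - 1 \<and> (-a - 1) mod b = b - 1 - a mod b"
proof -
  define k where "k = a div b"
  define r where "r = a mod b"
  have a: "a = b * k + r" unfolding k_def r_def by simp
  have r: "0 \<le> r" "r < b" unfolding r_def using assms by auto
  have e: "-a - 1 = (b - 1 - r) + (-k - 1) * b" using a by (simp add: algebra_simps)
  have d0: "(b - 1 - r) div b = 0" using r by (intro div_pos_pos_trivial) auto
  have m0: "(b - 1 - r) mod b = b - 1 - r" using r by (intro mod_pos_pos_trivial) auto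
  show ?thesis unfolding e using assms d0 m0 by (simp add: k_def r_def)
qed

lemma qdigit_neg:
  assumes "q > 0"
  shows "qdigit q (- int n - 1) r = q - 1 - n div q ^ r mod q"
proof -
  have Q: "int q ^ r > 0" using assms by simp
  have "(- int n - 1) div int q ^ r = - int (n div q ^ r) - 1"
    using neg_divmod[OF Q, of "int n"] by (simp add: zdiv_int of_nat_power)
  moreover have "(- int (n div q ^ r) - 1) mod int q = int q - 1 - int (n div q ^ r mod q)"
    using neg_divmod[of "int q" "int (n div q ^ r)"] assms by (simp add: zmod_int)
  moreover have "n div q ^ r mod q < q" using assms by simp
  ultimately show ?thesis unfolding qdigit_def by (simp add: nat_diff_distrib of_nat_diff)
qed

lemma low_digits:
  fixes n n' q m :: nat
  shows "(\<forall>r<m. n div q ^ r mod q = n' div q ^ r mod q) \<Longrightarrow> n mod q ^ m = n' mod q ^ m"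
proof (induction m)
  case 0 then show ?case by simp
next
  case (Suc m)
  have "n mod q ^ Suc m = q ^ m * (n div q ^ m mod q) + n mod q ^ m"
    by (simp only: power_Suc2 mod_mult2_eq)
  moreover have "n' mod q ^ Suc m = q ^ m * (n' div q ^ m mod q) + n' mod q ^ m"
    by (simp only: power_Suc2 mod_mult2_eq)
  ultimately show ?case using Suc by simp
qed

lemma block_props:
  fixes q k m :: nat
  assumes "q > 0"
  defines "N \<equiv> {k * q ^ m ..< (k + 1) * q ^ m}"
  shows "finite N" "card N = q ^ m"
    "\<forall>n\<in>N. \<forall>n'\<in>N. \<forall>r\<ge>m. n div q ^ r mod q = n' div q ^ r mod q"
    "\<forall>n\<in>N. \<forall>n'\<in>N. (\<forall>r<m. n div q ^ r mod q = n' div q ^ r mod q) \<longrightarrow> n = n'"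
proof -
  show "finite N" unfolding N_def by simp
  show "card N = q ^ m" unfolding N_def by (simp add: algebra_simps)
  have Qp: "q ^ m > 0" using assms by simp
  have dk: "n div q ^ m = k" if "n \<in> N" for n
  proof -
    have "k * q ^ m \<le> n" "n < (k + 1) * q ^ m" using that unfolding N_def by auto
    then show ?thesis using Qp
      by (metis add.commute div_less_iff_less_mult div_nat_eqI mult.commute mult_Suc plus_1_eq_Suc)
  qed
  have hi: "n div q ^ r = k div q ^ (r - m)" if "n \<in> N" "r \<ge> m" for n r
  proof -
    have "q ^ r = q ^ m * q ^ (r - m)" using that(2) by (simp add: power_add[symmetric])
    then have "n div q ^ r = n div q ^ m div q ^ (r - m)" by (simp add: div_mult2_eq)
    then show ?thesis using dk[OF that(1)] by simp
  qed
  show "\<forall>n\<in>N. \<forall>n'\<in>N. \<forall>r\<ge>m. n div q ^ r mod q = n' div q ^ r mod q"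
    using hi by simp
  show "\<forall>n\<in>N. \<forall>n'\<in>N. (\<forall>r<m. n div q ^ r mod q = n' div q ^ r mod q) \<longrightarrow> n = n'"
  proof (intro ballI impI)
    fix n n' assume nn: "n \<in> N" "n' \<in> N" and e: "\<forall>r<m. n div q ^ r mod q = n' div q ^ r mod q"
    have "n mod q ^ m = n' mod q ^ m" using low_digits[OF e] .
    moreover have "n div q ^ m = n' div q ^ m" using dk nn by simp
    ultimately show "n = n'" by (metis div_mult_mod_eq)
  qed
qed

lemma alt_even: "alt_seq (2 * n) = int n"
  unfolding alt_seq_def by simp

lemma alt_odd: "alt_seq (2 * n + 1) = - int n - 1"
  unfolding alt_seq_def by simp


lemma qdigit_lt: "q > 0 \<Longrightarrow> qdigit q z r < q"
  unfolding qdigit_def by (simp add: nat_less_iff)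

lemma block_net_iff:
  fixes C :: "nat \<Rightarrow> nat \<Rightarrow> nat \<Rightarrow> 'a::{field,finite}"
    and psi :: "nat \<Rightarrow> nat \<Rightarrow> 'a" and lam :: "nat \<Rightarrow> nat \<Rightarrow> 'a \<Rightarrow> nat" and z :: "nat \<Rightarrow> int"
  assumes adm: "admissible_bij s psi lam" and fr: "finite_row s C" and tm: "t \<le> m"
    and digit: "(\<forall>n r. qdigit CARD('a) (z n) r = n div CARD('a) ^ r mod CARD('a)) \<or>
                (\<forall>n r. qdigit CARD('a) (z n) r = CARD('a) - 1 - n div CARD('a) ^ r mod CARD('a))"
  shows "is_net CARD('a) t m s (\<lambda>n. trunc_pt CARD('a) m (alg_digit psi C lam (z n)))
           {k * CARD('a) ^ m ..< (k + 1) * CARD('a) ^ m} \<longleftrightarrow> good s C m t"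
proof -
  define q where "q = CARD('a)"
  have q0: "q > 0" unfolding q_def using card_field_ge2[where 'a='a] by simp
  define N where "N = {k * q ^ m ..< (k + 1) * q ^ m}"
  note bp = block_props[OF q0, of k m, folded N_def]
  define g where "g n r = qdigit q (z n) r" for n r
  have glt: "\<forall>n r. g n r < CARD('a)" unfolding g_def q_def using qdigit_lt q0 q_def by auto
  have gcg: "(\<forall>n\<in>N. \<forall>n'\<in>N. \<forall>r\<ge>m. g n r = g n' r) \<and>
      (\<forall>n\<in>N. \<forall>n'\<in>N. (\<forall>r<m. g n r = g n' r) \<longrightarrow> n = n')"
    using digit
  proof
    assume h: "\<forall>n r. qdigit CARD('a) (z n) r = n div CARD('a) ^ r mod CARD('a)"
    then have ge1: "g n r = n div q ^ r mod q" for n r unfolding g_def q_def by simp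
    show ?thesis unfolding ge1 by (rule conjI[OF bp(3) bp(4)])
  next
    assume h: "\<forall>n r. qdigit CARD('a) (z n) r = CARD('a) - 1 - n div CARD('a) ^ r mod CARD('a)"
    then have ge: "g n r = q - 1 - n div q ^ r mod q" for n r unfolding g_def q_def by simp
    have lt: "n div q ^ r mod q < q" for n r using q0 by simp
    have eq: "g n r = g n' r \<longleftrightarrow> n div q ^ r mod q = n' div q ^ r mod q" for n n' r
      unfolding ge using lt[of n r] lt[of n' r] by linarith
    show ?thesis unfolding eq by (rule conjI[OF bp(3) bp(4)])
  qed
  have "is_net CARD('a) t m s
     (\<lambda>n. trunc_pt CARD('a) m (\<lambda>i j. lam i j (\<Sum>r\<in>{r. C i j r \<noteq> 0}. C i j r * psi r (g n r)))) N
     \<longleftrightarrow> good s C m t"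
    by (rule main_equiv[OF adm fr bp(1) bp(2)[unfolded q_def] glt gcg[THEN conjunct1] gcg[THEN conjunct2] tm])
  then show ?thesis unfolding alg_digit_eq g_def N_def q_def .
qed

theorem corollary1:
  fixes C :: "nat \<Rightarrow> nat \<Rightarrow> nat \<Rightarrow> 'a::{field,finite}"
    and T :: "nat \<Rightarrow> nat" and s :: nat
    and psi :: "nat \<Rightarrow> nat \<Rightarrow> 'a" and lam :: "nat \<Rightarrow> nat \<Rightarrow> 'a \<Rightarrow> nat"
  assumes "s \<ge> 1"
    and "\<forall>m. T m \<le> m"
    and "finite_row s C"
    and "\<exists>psi1 lam1. alg1_admissible s psi1 lam1 \<and>
           is_TS_seq CARD('a) T s (\<lambda>n. alg_digit psi1 C lam1 (int n))"
    and "admissible_bij s psi lam"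
  shows "is_TS_seq CARD('a) T s (\<lambda>n. alg_digit psi C lam (alt_seq (2 * n)))
       \<and> is_TS_seq CARD('a) T s (\<lambda>n. alg_digit psi C lam (alt_seq (2 * n + 1)))"
proof -
  have q0: "CARD('a) > 0" using card_field_ge2[where 'a='a] by simp
  obtain psi1 lam1 where a1: "alg1_admissible s psi1 lam1"
    and ts1: "is_TS_seq CARD('a) T s (\<lambda>n. alg_digit psi1 C lam1 (int n))"
    using assms(4) by blast
  have adm1: "admissible_bij s psi1 lam1" using a1 unfolding alg1_admissible_def by simp
  have G: "good s C m (T m)" if tm: "T m < m" for m
  proof -
    have net: "is_net CARD('a) (T m) m s (\<lambda>n. trunc_pt CARD('a) m (alg_digit psi1 C lam1 (int n)))
        {0 * CARD('a) ^ m ..< (0 + 1) * CARD('a) ^ m}"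
      using ts1 tm unfolding is_TS_seq_def by blast
    have "\<forall>n r. qdigit CARD('a) (int n) r = n div CARD('a) ^ r mod CARD('a)"
      by (simp add: qdigit_nat)
    from block_net_iff[OF adm1 assms(3) less_imp_le[OF tm] disjI1[OF this], of 0] net show ?thesis by simp
  qed
  have ev: "\<forall>n r. qdigit CARD('a) (alt_seq (2 * n)) r = n div CARD('a) ^ r mod CARD('a)"
    by (simp add: alt_even qdigit_nat)
  have od: "\<forall>n r. qdigit CARD('a) (alt_seq (2 * n + 1)) r = CARD('a) - 1 - n div CARD('a) ^ r mod CARD('a)"
    by (simp only: alt_odd qdigit_neg[OF q0] simp_thms)
  show ?thesis
    unfolding is_TS_seq_def
  proof (intro conjI allI impI)
    fix k m assume tm: "T m < m"
    show "is_net CARD('a) (T m) m s (\<lambda>n. trunc_pt CARD('a) m (alg_digit psi C lam (alt_seq (2 * n))))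
        {k * CARD('a) ^ m..<(k + 1) * CARD('a) ^ m}"
      using block_net_iff[OF assms(5,3) less_imp_le[OF tm] disjI1[OF ev], of k] G[OF tm] by simp
    show "is_net CARD('a) (T m) m s (\<lambda>n. trunc_pt CARD('a) m (alg_digit psi C lam (alt_seq (2 * n + 1))))
        {k * CARD('a) ^ m..<(k + 1) * CARD('a) ^ m}"
      using block_net_iff[OF assms(5,3) less_imp_le[OF tm] disjI2[OF od], of k] G[OF tm] by simp
  qed
qed

end
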